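(* Let $\xi=(\xi_+,\xi_-)\in\mathcal{P}^2$ be minimal. Then the following three statements are equivalent: (1) there is a CSCA $\mathbf{a}$ with $\mathbf{a}\xi=u\xi$; (2) there is a CSCA $\mathbf{b}$ with $\mathbf{b}\xi=\binom{1}{u}$; (3) $\xi\wedge\bar\xi=u^{-1}+u$.
   Context: $\mathcal{P}$ denotes the ring of Laurent polynomials in $u$ over $\mathbb{Z}_2$; $\bar p(u)=p(u^{-1})$, applied entrywise to vectors. $\mathcal{R}$ is the subring of palindromes ($\bar p=p$). A CSCA is a $2\times2$ matrix with entries in $\mathcal{R}$ and determinant $1$. $\xi$ is minimal if $\xi_+,\xi_-$ have no common non-invertible divisor in $\mathcal{P}$. The wedge product is $\xi\wedge\eta=\xi_+\eta_-+\eta_+\xi_-$. *)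

theory Defs
  imports "HOL-Library.Z2" "HOL-Computational_Algebra.Formal_Laurent_Series"
begin

(* The ring P of Laurent polynomials in u over Z_2 is realised as the subring of
   formal Laurent series  bit fls  with finite support; u = fls_X, u^{-1} = fls_X_inv. *)

type_synonym lp = "bit fls"

definition laurent_poly :: "lp \<Rightarrow> bool" where
  "laurent_poly p \<longleftrightarrow> finite {n. fls_nth p n \<noteq> 0}"

(* bar p (u) = p(u^{-1}) : reversal of coefficients (only meaningful on P) *)
lift_definition lbar :: "lp \<Rightarrow> lp" is
  "\<lambda>f n. if finite {n. f n \<noteq> 0} then f (- n) else 0"
proof -
  fix f :: "int \<Rightarrow> bit"
  show "\<forall>\<^sub>\<infinity> n::nat. (if finite {n. f n \<noteq> 0} then f (- (- int n)) else 0) = 0"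
  proof (cases "finite {n. f n \<noteq> 0}")
    case True
    have "finite (int -` {n. f n \<noteq> 0})"
      using True by (rule finite_vimageI) (simp add: inj_def)
    then have "finite {m::nat. f (int m) \<noteq> 0}" by (simp add: vimage_def)
      then have "finite {m::nat. (if finite {n. f n \<noteq> 0} then f (- (- int m)) else 0) \<noteq> 0}"
      using True by simp
    then show ?thesis by (simp add: MOST_iff_finiteNeg)
  qed simp
qed

definition lp_dvd :: "lp \<Rightarrow> lp \<Rightarrow> bool" where
  "lp_dvd d p \<longleftrightarrow> (\<exists>r. laurent_poly r \<and> p = d * r)"

definition lp_unit :: "lp \<Rightarrow> bool" where
  "lp_unit d \<longleftrightarrow> (\<exists>r. laurent_poly r \<and> d * r = 1)"

definition palindrome :: "lp \<Rightarrow> bool" where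
  "palindrome p \<longleftrightarrow> laurent_poly p \<and> lbar p = p"

type_synonym lmat = "lp \<times> lp \<times> lp \<times> lp"

definition CSCA :: "lmat \<Rightarrow> bool" where
  "CSCA A \<longleftrightarrow> (case A of (a11, a12, a21, a22) \<Rightarrow>
     palindrome a11 \<and> palindrome a12 \<and> palindrome a21 \<and> palindrome a22 \<and>
     a11 * a22 - a12 * a21 = 1)"

definition mat_vec :: "lmat \<Rightarrow> lp \<times> lp \<Rightarrow> lp \<times> lp" where
  "mat_vec A x = (case A of (a11, a12, a21, a22) \<Rightarrow> case x of (x1, x2) \<Rightarrow>
     (a11 * x1 + a12 * x2, a21 * x1 + a22 * x2))"

definition minimal :: "lp \<times> lp \<Rightarrow> bool" where
  "minimal xi \<longleftrightarrow> (\<forall>d. laurent_poly d \<and> lp_dvd d (fst xi) \<and> lp_dvd d (snd xi) \<longrightarrow> lp_unit d)"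

definition wedge :: "lp \<times> lp \<Rightarrow> lp \<times> lp \<Rightarrow> lp" where
  "wedge xi eta = fst xi * snd eta + fst eta * snd xi"

definition vbar :: "lp \<times> lp \<Rightarrow> lp \<times> lp" where
  "vbar xi = (lbar (fst xi), lbar (snd xi))"

end

theory Submission imports Defs "HOL-Computational_Algebra.Polynomial_FPS" begin

lemma char2: "(x::lp) + x = 0"
  by (rule fls_eqI) simp

lemma minus_lp: "- (x::lp) = x"
  using char2[of x] by (metis add_eq_0_iff2)

lemma diff_lp: "(x::lp) - y = x + y"
  by (metis diff_conv_add_uminus minus_lp)

lemma lbar_nth: "fls_nth (lbar p) n = (if laurent_poly p then fls_nth p (-n) else 0)"
  unfolding laurent_poly_def by transfer simp

lemma supp_rep: "laurent_poly p \<Longrightarrow> p = (\<Sum>n\<in>{n. fls_nth p n \<noteq> 0}. fls_shift (-n) 1)"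
  unfolding laurent_poly_def
  by (rule fls_eqI) (simp add: fls_nth_sum)


lemma lp_0[simp]: "laurent_poly 0" by (simp add: laurent_poly_def)

lemma lp_shift[simp]: "laurent_poly p \<Longrightarrow> laurent_poly (fls_shift m p)"
proof -
  assume "laurent_poly p"
  hence "finite ((\<lambda>k. k - m) ` {n. fls_nth p n \<noteq> 0})" by (simp add: laurent_poly_def)
  moreover have "{n. fls_nth (fls_shift m p) n \<noteq> 0} \<subseteq> (\<lambda>k. k - m) ` {n. fls_nth p n \<noteq> 0}"
    by (auto simp: image_iff) (metis add_diff_cancel_right')
  ultimately show ?thesis unfolding laurent_poly_def using finite_subset by blast
qed

lemma lp_1[simp]: "laurent_poly 1"
proof -
  have "{n. fls_nth (1::lp) n \<noteq> 0} = {0}" by auto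
  thus ?thesis by (simp add: laurent_poly_def)
qed

lemma lp_add[simp]: "laurent_poly p \<Longrightarrow> laurent_poly q \<Longrightarrow> laurent_poly (p + q)"
  unfolding laurent_poly_def
  by (rule finite_subset[of _ "{n. fls_nth p n \<noteq> 0} \<union> {n. fls_nth q n \<noteq> 0}"]) auto

lemma lp_sum: "finite A \<Longrightarrow> (\<And>x. x \<in> A \<Longrightarrow> laurent_poly (f x)) \<Longrightarrow> laurent_poly (sum f A)"
  by (induction A rule: finite_induct) auto

lemma lp_mult[simp]: "laurent_poly p \<Longrightarrow> laurent_poly q \<Longrightarrow> laurent_poly (p * q)"
proof -
  assume p: "laurent_poly p" and q: "laurent_poly q"
  have "p * q = (\<Sum>n\<in>{n. fls_nth p n \<noteq> 0}. fls_shift (-n) 1) * q"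
    using supp_rep[OF p] by simp
  also have "\<dots> = (\<Sum>n\<in>{n. fls_nth p n \<noteq> 0}. fls_shift (-n) q)"
    by (simp add: sum_distrib_right fls_shifted_times_simps)
  finally have pq: "p * q = (\<Sum>n\<in>{n. fls_nth p n \<noteq> 0}. fls_shift (-n) q)" .
  have "laurent_poly (\<Sum>n\<in>{n. fls_nth p n \<noteq> 0}. fls_shift (-n) q)"
    using p q by (intro lp_sum) (auto simp: laurent_poly_def[of p])
  thus ?thesis by (simp only: pq)
qed

lemma lp_X[simp]: "laurent_poly fls_X" by (simp add: fls_X_conv_shift_1)
lemma lp_Xi[simp]: "laurent_poly fls_X_inv" by (simp add: fls_X_inv_conv_shift_1)

lemma lbar_lp[simp]: "laurent_poly (lbar p)"
proof (cases "laurent_poly p")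
  case True
  hence "finite (uminus ` {n. fls_nth p n \<noteq> 0})" by (simp add: laurent_poly_def)
  moreover have "{n. fls_nth (lbar p) n \<noteq> 0} \<subseteq> uminus ` {n. fls_nth p n \<noteq> 0}"
    using True by (auto simp: lbar_nth image_iff) (metis minus_minus)
  ultimately show ?thesis unfolding laurent_poly_def using finite_subset by blast
next
  case False
  hence "lbar p = 0" by (intro fls_eqI) (simp add: lbar_nth)
  thus ?thesis by simp
qed

lemma lbar_add: "laurent_poly p \<Longrightarrow> laurent_poly q \<Longrightarrow> lbar (p + q) = lbar p + lbar q"
  by (rule fls_eqI) (simp add: lbar_nth)

lemma lbar_shift: "laurent_poly q \<Longrightarrow> lbar (fls_shift m q) = fls_shift (-m) (lbar q)"
  by (rule fls_eqI) (simp add: lbar_nth)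

lemma lbar_1[simp]: "lbar 1 = 1"
  by (rule fls_eqI) (simp add: lbar_nth)

lemma lbar_0[simp]: "lbar 0 = 0"
  by (rule fls_eqI) (simp add: lbar_nth)

lemma lbar_lbar[simp]: "laurent_poly p \<Longrightarrow> lbar (lbar p) = p"
  by (rule fls_eqI) (simp add: lbar_nth)

lemma lbar_sum: "finite A \<Longrightarrow> (\<And>x. x \<in> A \<Longrightarrow> laurent_poly (f x)) \<Longrightarrow> lbar (sum f A) = (\<Sum>x\<in>A. lbar (f x))"
  by (induction A rule: finite_induct) (auto simp: lbar_add lp_sum)

lemma lbar_mult: "laurent_poly p \<Longrightarrow> laurent_poly q \<Longrightarrow> lbar (p * q) = lbar p * lbar q"
proof -
  assume p: "laurent_poly p" and q: "laurent_poly q"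
  define S where "S = {n. fls_nth p n \<noteq> 0}"
  have fS: "finite S" using p by (simp add: S_def laurent_poly_def)
  have "p * q = (\<Sum>n\<in>S. fls_shift (-n) 1) * q"
    using supp_rep[OF p] by (simp add: S_def)
  also have "\<dots> = (\<Sum>n\<in>S. fls_shift (-n) q)"
    by (simp add: sum_distrib_right fls_shifted_times_simps)
  finally have "lbar (p*q) = (\<Sum>n\<in>S. fls_shift n (lbar q))"
    using fS q by (simp add: lbar_sum lbar_shift)
  moreover have "lbar p = (\<Sum>n\<in>S. fls_shift n 1)"
    using supp_rep[OF p] fS by (metis (no_types, lifting) S_def lbar_1 lbar_shift lbar_sum lp_1 lp_shift minus_minus sum.cong)
  ultimately show ?thesis
    by (simp add: sum_distrib_right fls_shifted_times_simps)
qed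

lemma lbar_X[simp]: "lbar fls_X = fls_X_inv"
  by (simp add: fls_X_conv_shift_1 fls_X_inv_conv_shift_1 lbar_shift)
lemma lbar_Xi[simp]: "lbar fls_X_inv = fls_X"
  by (simp add: fls_X_conv_shift_1 fls_X_inv_conv_shift_1 lbar_shift)

lemma X_Xi[simp]: "fls_X * fls_X_inv = (1::lp)" "fls_X_inv * fls_X = (1::lp)"
  by (simp_all add: fls_X_conv_shift_1 fls_X_inv_conv_shift_1 fls_shifted_times_simps)

lemma pal_add[simp]: "palindrome p \<Longrightarrow> palindrome q \<Longrightarrow> palindrome (p + q)"
  by (simp add: palindrome_def lbar_add)
lemma pal_mult[simp]: "palindrome p \<Longrightarrow> palindrome q \<Longrightarrow> palindrome (p * q)"
  by (simp add: palindrome_def lbar_mult)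
lemma pal_1[simp]: "palindrome 1" by (simp add: palindrome_def)
lemma pal_0[simp]: "palindrome 0" by (simp add: palindrome_def)
lemma pal_t[simp]: "palindrome (fls_X_inv + fls_X)"
  by (simp add: palindrome_def lbar_add add.commute)


definition decomp :: "lp \<Rightarrow> bool" where
  "decomp p \<longleftrightarrow> (\<exists>d b. palindrome d \<and> palindrome b \<and> p = d + b * fls_X)"

lemma two_lp[simp]: "(2::lp) = 0"
  using char2[of 1] by simp

lemma X_Xi_b[simp]: "fls_X * (fls_X_inv * b) = (b::lp)" "fls_X_inv * (fls_X * b) = (b::lp)"
  by (simp_all add: mult.assoc[symmetric])

lemma X2: "fls_X * fls_X = (fls_X_inv + fls_X) * fls_X + (1::lp)"
  by (simp add: algebra_simps)

lemma decomp_add: "decomp p \<Longrightarrow> decomp q \<Longrightarrow> decomp (p + q)"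
  unfolding decomp_def
proof (elim exE conjE)
  fix d b d' b' assume "palindrome d" "palindrome b" "p = d + b * fls_X"
    "palindrome d'" "palindrome b'" "q = d' + b' * fls_X"
  thus "\<exists>d b. palindrome d \<and> palindrome b \<and> p + q = d + b * fls_X"
    by (intro exI[of _ "d + d'"] exI[of _ "b + b'"]) (simp add: algebra_simps)
qed

lemma decomp_X: "decomp p \<Longrightarrow> decomp (fls_X * p)"
  unfolding decomp_def
proof (elim exE conjE)
  fix d b assume h: "palindrome d" "palindrome b" "p = d + b * fls_X"
  have "fls_X * p = b + (d + b * (fls_X_inv + fls_X)) * fls_X"
    unfolding h(3) by (simp add: algebra_simps)
  thus "\<exists>d b. palindrome d \<and> palindrome b \<and> fls_X * p = d + b * fls_X"
    using h by (intro exI[of _ b] exI[of _ "d + b * (fls_X_inv + fls_X)"]) simp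
qed

lemma Xi_eq: "fls_X_inv = (fls_X_inv + fls_X) + (fls_X::lp)"
  by (simp add: algebra_simps)

lemma decomp_Xi: "decomp p \<Longrightarrow> decomp (fls_X_inv * p)"
  unfolding decomp_def
proof (elim exE conjE)
  fix d b assume h: "palindrome d" "palindrome b" "p = d + b * fls_X"
  have "fls_X_inv * p = (d * (fls_X_inv + fls_X) + b) + d * fls_X"
    unfolding h(3) by (simp add: algebra_simps)
  thus "\<exists>d b. palindrome d \<and> palindrome b \<and> fls_X_inv * p = d + b * fls_X"
    using h by (intro exI[of _ "d * (fls_X_inv + fls_X) + b"] exI[of _ d]) simp
qed

lemma decomp_mono: "decomp (fls_shift (-n) 1)"
proof (induction n rule: int_induct[where k=0])
  case base
  show ?case unfolding decomp_def by (intro exI[of _ 1] exI[of _ 0]) simp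
next
  case (step1 i)
  have "fls_shift (-(i+1)) 1 = fls_X * fls_shift (-i) (1::lp)"
    by (simp add: fls_X_conv_shift_1 fls_shifted_times_simps algebra_simps)
  thus ?case using decomp_X[OF step1(2)] by simp
next
  case (step2 i)
  have "fls_shift (-(i-1)) 1 = fls_X_inv * fls_shift (-i) (1::lp)"
    by (simp add: fls_X_inv_conv_shift_1 fls_shifted_times_simps algebra_simps)
  thus ?case using decomp_Xi[OF step2(2)] by simp
qed

lemma decomp_sum: "finite A \<Longrightarrow> decomp (\<Sum>n\<in>A. fls_shift (-n) 1)"
proof (induction A rule: finite_induct)
  case empty
  show ?case unfolding decomp_def by (intro exI[of _ 0] exI[of _ 0]) simp
next
  case (insert x F)
  thus ?case by (simp add: decomp_add decomp_mono)
qed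

lemma decomp_lp: "laurent_poly p \<Longrightarrow> decomp p"
  using supp_rep[of p] decomp_sum[of "{n. fls_nth p n \<noteq> 0}"]
  by (metis laurent_poly_def)

lemma deg1: "laurent_poly x \<Longrightarrow> x \<noteq> 0 \<Longrightarrow> fls_subdegree (lbar x) \<le> - fls_subdegree x"
  by (rule fls_subdegree_leI) (simp add: lbar_nth)

lemma deg2:
  assumes "laurent_poly x" "x \<noteq> 0" "fls_subdegree (lbar x) = - fls_subdegree x"
  shows "x = fls_shift (- fls_subdegree x) 1"
proof (rule fls_eqI)
  fix n
  show "fls_nth x n = fls_nth (fls_shift (- fls_subdegree x) 1) n"
  proof (cases "n = fls_subdegree x")
    case True
    have "fls_nth x (fls_subdegree x) \<noteq> 0" using assms(2) by (rule nth_fls_subdegree_nonzero)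
    hence "fls_nth x (fls_subdegree x) = 1" by (simp only: bit_not_zero_iff)
    thus ?thesis using True by simp
  next
    case False
    show ?thesis
    proof (cases "n < fls_subdegree x")
      case True thus ?thesis by simp
    next
      case F2: False
      have "fls_nth x n = 0"
      proof (rule ccontr)
        assume "fls_nth x n \<noteq> 0"
        hence "fls_nth (lbar x) (-n) \<noteq> 0" using assms(1) by (simp add: lbar_nth)
        hence "fls_subdegree (lbar x) \<le> -n" by (rule fls_subdegree_leI)
        thus False using assms(3) F2 False by linarith
      qed
      thus ?thesis using False by simp
    qed
  qed
qed

lemma pal_deg:
  assumes "palindrome x" "x \<noteq> 0"
  shows "fls_subdegree x \<le> 0" "fls_subdegree x = 0 \<Longrightarrow> x = 1"
proof -
  have l: "laurent_poly x" "lbar x = x" using assms(1) by (auto simp: palindrome_def)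
  show "fls_subdegree x \<le> 0" using deg1[OF l(1) assms(2)] l(2) by simp
  assume "fls_subdegree x = 0"
  thus "x = 1" using deg2[OF l(1) assms(2)] l(2) by simp
qed

lemma t_subdeg: "fls_subdegree (fls_X_inv + fls_X :: lp) = -1"
  by (rule fls_subdegree_eqI) auto

lemma t_nz: "(fls_X_inv + fls_X :: lp) \<noteq> 0"
  by (rule fls_nonzeroI[of _ "-1"]) simp


definition PF :: "bit poly \<Rightarrow> lp" where "PF f = fps_to_fls (fps_of_poly f)"

lemma PF_mult: "PF (f * g) = PF f * PF g"
  by (simp add: PF_def fps_of_poly_mult fls_times_fps_to_fls)
lemma PF_add: "PF (f + g) = PF f + PF g"
  by (simp add: PF_def fps_of_poly_add)
lemma PF_1[simp]: "PF 1 = 1" by (simp add: PF_def)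
lemma PF_0[simp]: "PF 0 = 0" by (simp add: PF_def)
lemma PF_monom: "PF (monom 1 k) = fls_shift (- int k) 1"
  by (rule fls_eqI) (auto simp: PF_def coeff_monom)

lemma lp_PF[simp]: "laurent_poly (PF f)"
proof -
  have "{n. fls_nth (PF f) n \<noteq> 0} \<subseteq> int ` {..degree f}"
  proof
    fix n assume "n \<in> {n. fls_nth (PF f) n \<noteq> 0}"
    hence h: "\<not> n < 0" "coeff f (nat n) \<noteq> 0" by (auto simp: PF_def split: if_splits)
    hence "nat n \<le> degree f" using le_degree by blast
    thus "n \<in> int ` {..degree f}" using h by (auto simp: image_iff intro!: bexI[of _ "nat n"])
  qed
  thus ?thesis unfolding laurent_poly_def using finite_subset by blast
qed

lemma PF_shift_up: "fls_shift m (PF f) = fls_shift (m + int k) (PF (monom 1 k * f))"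
  by (simp add: PF_mult PF_monom fls_shifted_times_simps)

lemma rep_sum: "finite A \<Longrightarrow> \<exists>f m. (\<Sum>n\<in>A. fls_shift (-n) 1) = fls_shift m (PF f)"
proof (induction A rule: finite_induct)
  case empty
  show ?case by (intro exI[of _ 0] exI[of _ 0]) simp
next
  case (insert x F)
  then obtain f m where fm: "(\<Sum>n\<in>F. fls_shift (-n) 1) = fls_shift m (PF f)" by blast
  define M where "M = max m (-x)"
  have a: "fls_shift m (PF f) = fls_shift M (PF (monom 1 (nat (M - m)) * f))"
    using PF_shift_up[of m f "nat (M - m)"] by (simp add: M_def)
  have b: "fls_shift (-x) 1 = fls_shift M (PF (monom 1 (nat (M + x)) * 1))"
    using PF_shift_up[of "-x" 1 "nat (M + x)"] by (simp add: M_def)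
  have "(\<Sum>n\<in>insert x F. fls_shift (-n) 1) = fls_shift M (PF (monom 1 (nat (M + x)) * 1 + monom 1 (nat (M - m)) * f))"
    using insert fm a b by (simp add: PF_add fls_shift_plus)
  thus ?case by blast
qed

lemma lp_rep: "laurent_poly p \<Longrightarrow> \<exists>f m. p = fls_shift m (PF f)"
  using supp_rep[of p] rep_sum[of "{n. fls_nth p n \<noteq> 0}"] by (metis laurent_poly_def)

lemma poly_bezout:
  fixes f1 f2 :: "bit poly"
  shows "\<exists>a b g. a * f1 + b * f2 = g \<and> g dvd f1 \<and> g dvd f2"
proof (induction "euclidean_size f2" arbitrary: f1 f2 rule: less_induct)
  case less
  show ?case
  proof (cases "f2 = 0")
    case True
    thus ?thesis by (intro exI[of _ 1] exI[of _ 0] exI[of _ f1]) simp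
  next
    case False
    hence "euclidean_size (f1 mod f2) < euclidean_size f2" by (rule mod_size_less)
    then obtain a b g where h: "a * f2 + b * (f1 mod f2) = g" "g dvd f2" "g dvd f1 mod f2"
      using less by blast
    have e: "f1 mod f2 = f1 - (f1 div f2) * f2" by (simp add: minus_div_mult_eq_mod)
    have "g dvd f1" using h(2,3) by (metis dvd_mod_iff)
    moreover have "b * f1 + (a - b * (f1 div f2)) * f2 = g"
      using h(1) unfolding e by (simp add: algebra_simps)
    ultimately show ?thesis using h(2) by blast
  qed
qed

lemma bezout_lp:
  assumes "laurent_poly x" "laurent_poly y" "minimal (x, y)"
  shows "\<exists>r s. laurent_poly r \<and> laurent_poly s \<and> r * x + s * y = 1"
proof -
  obtain f1 m1 where x: "x = fls_shift m1 (PF f1)" using lp_rep[OF assms(1)] by blast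
  obtain f2 m2 where y: "y = fls_shift m2 (PF f2)" using lp_rep[OF assms(2)] by blast
  obtain \<alpha> \<beta> g where bz: "\<alpha> * f1 + \<beta> * f2 = g" "g dvd f1" "g dvd f2"
    using poly_bezout by blast
  obtain h1 where h1: "f1 = g * h1" using bz(2) by (meson dvd_def)
  obtain h2 where h2: "f2 = g * h2" using bz(3) by (meson dvd_def)
  have "lp_dvd (PF g) x" unfolding lp_dvd_def x h1
    by (intro exI[of _ "fls_shift m1 (PF h1)"]) (simp add: PF_mult fls_shifted_times_simps)
  moreover have "lp_dvd (PF g) y" unfolding lp_dvd_def y h2
    by (intro exI[of _ "fls_shift m2 (PF h2)"]) (simp add: PF_mult fls_shifted_times_simps)
  ultimately have "lp_unit (PF g)" using assms(3) unfolding minimal_def by auto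
  then obtain z where z: "laurent_poly z" "PF g * z = 1" unfolding lp_unit_def by blast
  have "(fls_shift (-m1) (PF \<alpha>) * z) * x + (fls_shift (-m2) (PF \<beta>) * z) * y = PF (\<alpha> * f1 + \<beta> * f2) * z"
    unfolding x y by (simp add: PF_mult PF_add fls_shifted_times_simps algebra_simps)
  also have "\<dots> = 1" using bz(1) z by simp
  finally show ?thesis using z(1) by (intro exI[of _ "fls_shift (-m1) (PF \<alpha>) * z"] exI[of _ "fls_shift (-m2) (PF \<beta>) * z"]) simp
qed


lemma c2': "(\<And>x::'a::comm_ring_1. x + x = 0) \<Longrightarrow> (x::'a) + (x + y) = y"
  by (metis add.assoc add_0)

lemma char2_left[simp]: "(x::lp) + (x + y) = y"
  using c2'[OF char2] .

lemma pal_lp: "palindrome p \<Longrightarrow> laurent_poly p" by (simp add: palindrome_def)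
lemma pal_bar: "palindrome p \<Longrightarrow> lbar p = p" by (simp add: palindrome_def)

lemma g_inv:
  fixes a b c d u x1 x2 :: "'a::comm_ring_1" assumes c2: "\<And>x::'a. x + x = 0"
    and det: "a*d+b*c = 1" and h: "a*x1+b*x2 = 1" "c*x1+d*x2 = u"
  shows "x1 = d + b*u" "x2 = c + a*u"
proof -
  have "x1 = (a*d+b*c)*x1" using det by simp
  also have "\<dots> = d*(a*x1+b*x2) + b*(c*x1+d*x2)" by (simp add: algebra_simps c2 c2'[OF c2])
  finally show "x1 = d + b*u" using h by simp
  have "x2 = (a*d+b*c)*x2" using det by simp
  also have "\<dots> = c*(a*x1+b*x2) + a*(c*x1+d*x2)" by (simp add: algebra_simps c2 c2'[OF c2])
  finally show "x2 = c + a*u" using h by simp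
qed

lemma g_wedge:
  fixes a b c d u v :: "'a::comm_ring_1" assumes c2: "\<And>x::'a. x + x = 0" and uv: "u*v = 1"
  shows "(d+b*u)*(c+a*v) + (d+b*v)*(c+a*u) = (a*d+b*c)*(v+u)"
  using uv by (simp add: algebra_simps c2 c2'[OF c2])

lemma g_fwd:
  fixes a b c d u :: "'a::comm_ring_1" assumes c2: "\<And>x::'a. x + x = 0"
  shows "a*(d + b*u) + b*(c + a*u) = a*d+b*c" "c*(d + b*u) + d*(c + a*u) = (a*d+b*c)*u"
  by (simp_all add: algebra_simps c2 c2'[OF c2])

lemma g_A1:
  fixes a b c d w p q :: "'a::comm_ring_1" assumes c2: "\<And>x::'a. x + x = 0"
  shows "(d*c + b*(a+w*c))*p + (d*d + b*(b+w*d))*q = d*(c*p+d*q) + b*((a*p+b*q) + w*(c*p+d*q))"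
  by (simp_all add: algebra_simps c2 c2'[OF c2])
lemma g_A2:
  fixes a b c d w p q :: "'a::comm_ring_1" assumes c2: "\<And>x::'a. x + x = 0"
  shows "(c*c + a*(a+w*c))*p + (c*d + a*(b+w*d))*q = c*(c*p+d*q) + a*((a*p+b*q) + w*(c*p+d*q))"
  by (simp_all add: algebra_simps c2 c2'[OF c2])
lemma g_A3:
  fixes a b c d w :: "'a::comm_ring_1" assumes c2: "\<And>x::'a. x + x = 0"
  shows  "(d*c + b*(a+w*c))*(c*d + a*(b+w*d)) + (d*d + b*(b+w*d))*(c*c + a*(a+w*c)) = (a*d+b*c)*(a*d+b*c)"
  by (simp_all add: algebra_simps c2 c2'[OF c2])

lemma lbar_x: "laurent_poly p \<Longrightarrow> lbar (p * fls_X) = lbar p * fls_X_inv"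
  by (simp add: lbar_mult)
lemma lbar_xi: "laurent_poly p \<Longrightarrow> lbar (p * fls_X_inv) = lbar p * fls_X"
  by (simp add: lbar_mult)

lemma eq23:
  assumes l1: "laurent_poly x1" and l2: "laurent_poly x2"
  shows "(\<exists>B. CSCA B \<and> mat_vec B (x1, x2) = (1, fls_X)) \<longleftrightarrow> wedge (x1, x2) (vbar (x1, x2)) = fls_X_inv + fls_X"
proof
  assume "\<exists>B. CSCA B \<and> mat_vec B (x1, x2) = (1, fls_X)"
  then obtain a b c d where p: "palindrome a" "palindrome b" "palindrome c" "palindrome d"
    and det: "a*d + b*c = 1" and h: "a*x1+b*x2 = 1" "c*x1+d*x2 = fls_X"
    by (auto simp: CSCA_def mat_vec_def diff_lp)
  have x: "x1 = d + b*fls_X" "x2 = c + a*fls_X" using g_inv[OF char2 det h] by auto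
  have "wedge (x1, x2) (vbar (x1, x2)) = (d+b*fls_X)*(c+a*fls_X_inv) + (d+b*fls_X_inv)*(c+a*fls_X)"
    unfolding wedge_def vbar_def x using p
    by (simp add: lbar_add lbar_mult pal_lp pal_bar)
  also have "\<dots> = fls_X_inv + fls_X" using g_wedge[OF char2 X_Xi(1), where a=a and b=b and c=c and d=d] det by simp
  finally show "wedge (x1, x2) (vbar (x1, x2)) = fls_X_inv + fls_X" .
next
  assume w: "wedge (x1, x2) (vbar (x1, x2)) = fls_X_inv + fls_X"
  obtain d b where db: "palindrome d" "palindrome b" "x1 = d + b * fls_X"
    using decomp_lp[OF l1] unfolding decomp_def by blast
  obtain c a where ca: "palindrome c" "palindrome a" "x2 = c + a * fls_X"
    using decomp_lp[OF l2] unfolding decomp_def by blast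
  have "wedge (x1, x2) (vbar (x1, x2)) = (d+b*fls_X)*(c+a*fls_X_inv) + (d+b*fls_X_inv)*(c+a*fls_X)"
    unfolding wedge_def vbar_def db(3) ca(3) using db ca
    by (simp add: lbar_add lbar_mult pal_lp pal_bar)
  also have "\<dots> = (a*d+b*c)*(fls_X_inv + fls_X)" using g_wedge[OF char2 X_Xi(1), where a=a and b=b and c=c and d=d] by simp
  finally have "(a*d+b*c)*(fls_X_inv + fls_X) = 1 * (fls_X_inv + fls_X)" using w by simp
  hence det: "a*d+b*c = 1" using t_nz by (metis mult_right_cancel)
  show "\<exists>B. CSCA B \<and> mat_vec B (x1, x2) = (1, fls_X)"
    using db ca det g_fwd[OF char2, where a=a and b=b and c=c and d=d and u=fls_X]
    by (intro exI[of _ "(a,b,c,d)"]) (simp add: CSCA_def mat_vec_def diff_lp)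
qed

lemma imp21:
  assumes "\<exists>B. CSCA B \<and> mat_vec B (x1, x2) = (1, fls_X)"
  shows "\<exists>A. CSCA A \<and> mat_vec A (x1, x2) = (fls_X * x1, fls_X * x2)"
proof -
  obtain a b c d where p: "palindrome a" "palindrome b" "palindrome c" "palindrome d"
    and det: "a*d + b*c = 1" and h: "a*x1+b*x2 = 1" "c*x1+d*x2 = fls_X"
    using assms by (auto simp: CSCA_def mat_vec_def diff_lp)
  have x: "x1 = d + b*fls_X" "x2 = c + a*fls_X" using g_inv[OF char2 det h] by auto
  define w :: lp where "w = fls_X_inv + fls_X"
  have pw: "palindrome w" by (simp add: w_def)
  have wX: "1 + w * fls_X = fls_X * fls_X" by (simp add: w_def algebra_simps)
  note G = g_A1[OF char2, where a=a and b=b and c=c and d=d and w=w and p=x1 and q=x2]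
     g_A2[OF char2, where a=a and b=b and c=c and d=d and w=w and p=x1 and q=x2]
     g_A3[OF char2, where a=a and b=b and c=c and d=d and w=w]
  have e1: "(d*c + b*(a+w*c))*x1 + (d*d + b*(b+w*d))*x2 = fls_X * x1"
    unfolding G(1) h wX unfolding x(1) by (simp add: algebra_simps)
  have e2: "(c*c + a*(a+w*c))*x1 + (c*d + a*(b+w*d))*x2 = fls_X * x2"
    unfolding G(2) h wX unfolding x(2) by (simp add: algebra_simps)
  show ?thesis
    using p pw e1 e2 G(3) det
    by (intro exI[of _ "(d*c + b*(a+w*c), d*d + b*(b+w*d), c*c + a*(a+w*c), c*d + a*(b+w*d))"])
       (simp add: CSCA_def mat_vec_def diff_lp)
qed


lemma g_char:
  fixes a b c d u p :: "'a::comm_ring_1" assumes c2: "\<And>x::'a. x + x = 0"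
  shows "(a*d+b*c + u*(a+d) + u*u)*p = (d+u)*(a*p+b*q+u*p) + b*(c*p+d*q+u*q)"
  by (simp add: algebra_simps c2 c2'[OF c2])

lemma sum0: "(y::lp) + z = 0 \<Longrightarrow> y = z"
  by (metis add_left_cancel char2)

lemma nth0_bar: "laurent_poly z \<Longrightarrow> fls_nth (lbar z) 0 = fls_nth z 0"
  by (simp add: lbar_nth)

lemma imp13:
  assumes l1: "laurent_poly x1" and l2: "laurent_poly x2" and m: "minimal (x1, x2)"
    and "\<exists>A. CSCA A \<and> mat_vec A (x1, x2) = (fls_X * x1, fls_X * x2)"
  shows "wedge (x1, x2) (vbar (x1, x2)) = fls_X_inv + fls_X"
proof -
  define u :: lp where "u = fls_X"
  define v :: lp where "v = fls_X_inv"
  define t where "t = v + u"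
  have uv: "u * v = 1" "v * u = 1" by (simp_all add: u_def v_def)
  obtain a b c d where p: "palindrome a" "palindrome b" "palindrome c" "palindrome d"
    and det: "a*d + b*c = 1" and h: "a*x1+b*x2 = u*x1" "c*x1+d*x2 = u*x2"
    using assms(4) by (auto simp: CSCA_def mat_vec_def diff_lp u_def)
  have la: "laurent_poly a" "laurent_poly b" "laurent_poly c" "laurent_poly d"
    using p by (auto simp: pal_lp)
  have ba: "lbar a = a" "lbar b = b" "lbar c = c" "lbar d = d" using p by (auto simp: pal_bar)
  have nz: "x1 \<noteq> 0 \<or> x2 \<noteq> 0"
  proof (rule ccontr)
    assume "\<not> ?thesis"
    hence "lp_unit 0" using m unfolding minimal_def lp_dvd_def by force
    thus False unfolding lp_unit_def by simp
  qed
  have k1: "a*x1+b*x2+u*x1 = 0" using h(1) by (simp add: char2)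
  have k2: "c*x1+d*x2+u*x2 = 0" using h(2) by (simp add: char2)
  have "(a*d+b*c + u*(a+d) + u*u)*x1 = 0"
    using g_char[OF char2, where a=a and b=b and c=c and d=d and u=u and p=x1 and q=x2] k1 k2 by simp
  moreover have "(a*d+b*c + u*(a+d) + u*u)*x2 = 0"
  proof -
    have "(a*d+b*c + u*(a+d) + u*u)*x2 = (a+u)*(c*x1+d*x2+u*x2) + c*(a*x1+b*x2+u*x1)"
      by (simp add: algebra_simps)
    thus ?thesis using k1 k2 by simp
  qed
  ultimately have "1 + u*(a+d) + u*u = 0" using nz det by auto
  hence "v * (1 + u*(a+d) + u*u) = 0" by simp
  moreover have "v * (1 + u*(a+d) + u*u) = v + (v*u)*(a+d) + (v*u)*u"
    by (simp add: algebra_simps)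
  ultimately have z: "v + (a + d) + u = 0" using uv by simp
  have "d = (v + (a + d) + u) + (a + t)" by (simp add: t_def algebra_simps)
  hence tr: "d = a + t" using z by simp
  have "(a+u)*x1 + b*x2 = a*x1+b*x2+u*x1" by (simp add: algebra_simps)
  hence "(a+u)*x1 + b*x2 = 0" using k1 by simp
  hence E1: "(a+u)*x1 = b*x2" by (rule sum0)
  have "c*x1 + (a+v)*x2 = c*x1+d*x2+u*x2" unfolding tr t_def by (simp add: algebra_simps)
  hence "c*x1 + (a+v)*x2 = 0" using k2 by simp
  hence E2: "c*x1 = (a+v)*x2" by (rule sum0)
  define y1 where "y1 = lbar x1"
  define y2 where "y2 = lbar x2"
  have ly: "laurent_poly y1" "laurent_poly y2" by (simp_all add: y1_def y2_def)
  have F1: "(a+v)*y1 = b*y2"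
    using arg_cong[OF E1, of lbar] l1 l2 la ba by (simp add: lbar_mult lbar_add y1_def y2_def u_def v_def)
  have F2: "c*y1 = (a+u)*y2"
    using arg_cong[OF E2, of lbar] l1 l2 la ba by (simp add: lbar_mult lbar_add y1_def y2_def u_def v_def)
  define w where "w = x1*y2 + y1*x2"
  have wdef: "wedge (x1, x2) (vbar (x1, x2)) = w" by (simp add: wedge_def vbar_def w_def y1_def y2_def)
  have W1: "b*w = t*(x1*y1)"
  proof -
    have "b*w = x1*(b*y2) + y1*(b*x2)" by (simp add: w_def algebra_simps)
    also have "\<dots> = x1*((a+v)*y1) + y1*((a+u)*x1)" using F1 E1 by simp
    also have "\<dots> = t*(x1*y1)" by (simp add: t_def algebra_simps)
    finally show ?thesis .
  qed
  have W2: "(a+v)*w = t*(x1*y2)"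
  proof -
    have "(a+v)*w = x1*y2*(a+v) + x2*((a+v)*y1)" by (simp add: w_def algebra_simps)
    also have "\<dots> = x1*y2*(a+v) + x2*(b*y2)" using F1 by simp
    also have "\<dots> = x1*y2*(a+v) + y2*((a+u)*x1)" using E1 by (simp add: algebra_simps)
    also have "\<dots> = t*(x1*y2)" by (simp add: t_def algebra_simps)
    finally show ?thesis .
  qed
  have W3: "(a+u)*w = t*(x2*y1)"
  proof -
    have "(a+u)*w = y2*((a+u)*x1) + x2*y1*(a+u)" by (simp add: w_def algebra_simps)
    also have "\<dots> = y2*(b*x2) + x2*y1*(a+u)" using E1 by simp
    also have "\<dots> = x2*((a+v)*y1) + x2*y1*(a+u)" using F1 by (simp add: algebra_simps)
    also have "\<dots> = t*(x2*y1)" by (simp add: t_def algebra_simps)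
    finally show ?thesis .
  qed
  have W4: "c*w = t*(x2*y2)"
  proof -
    have "c*w = y2*(c*x1) + x2*(c*y1)" by (simp add: w_def algebra_simps)
    also have "\<dots> = y2*((a+v)*x2) + x2*((a+u)*y2)" using E2 F2 by simp
    also have "\<dots> = t*(x2*y2)" by (simp add: t_def algebra_simps)
    finally show ?thesis .
  qed
  obtain r s where rs: "laurent_poly r" "laurent_poly s" "r*x1 + s*x2 = 1"
    using bezout_lp[OF l1 l2 m] by blast
  define r' where "r' = lbar r"
  define s' where "s' = lbar s"
  have "lbar (r*x1 + s*x2) = r'*y1 + s'*y2"
    using rs(1,2) l1 l2 by (simp add: lbar_mult lbar_add r'_def s'_def y1_def y2_def)
  hence rs': "r'*y1 + s'*y2 = 1" using rs(3) by simp
  define L where "L = b*(r*r') + (a+v)*(r*s') + (a+u)*(s*r') + c*(s*s')"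
  have "w*L = r*r'*(b*w) + r*s'*((a+v)*w) + s*r'*((a+u)*w) + s*s'*(c*w)"
    by (simp add: L_def algebra_simps)
  also have "\<dots> = t*((r*x1 + s*x2)*(r'*y1 + s'*y2))"
    unfolding W1 W2 W3 W4 by (simp add: algebra_simps)
  also have "\<dots> = t" using rs(3) rs' by simp
  finally have wL: "w*L = t" .
  have lw: "laurent_poly w" using l1 l2 ly by (simp add: w_def)
  have pw: "palindrome w"
    using lw l1 l2 by (simp add: palindrome_def w_def y1_def y2_def lbar_add lbar_mult add.commute mult.commute)
  have pL: "palindrome L"
  proof -
    have lL: "laurent_poly L" using la rs by (simp add: L_def r'_def s'_def u_def v_def)
    have "lbar L = b*(r'*r) + (a+u)*(r'*s) + (a+v)*(s'*r) + c*(s'*s)"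
      using la ba rs by (simp add: L_def r'_def s'_def u_def v_def lbar_add lbar_mult)
    also have "\<dots> = L" by (simp add: L_def algebra_simps)
    finally show ?thesis using lL by (simp add: palindrome_def)
  qed
  have tnz: "t \<noteq> 0" using t_nz by (simp add: t_def u_def v_def)
  have wnz: "w \<noteq> 0" and Lnz: "L \<noteq> 0" using wL tnz by auto
  have "fls_subdegree w + fls_subdegree L = -1"
    using fls_subdegree_mult[OF wnz Lnz] wL t_subdeg by (simp add: t_def u_def v_def)
  moreover have "fls_subdegree w \<le> 0" "fls_subdegree L \<le> 0"
    using pal_deg(1)[OF pw wnz] pal_deg(1)[OF pL Lnz] by auto
  ultimately have "fls_subdegree w = 0 \<or> fls_subdegree L = 0" by linarith
  moreover have "w \<noteq> 1"
  proof
    assume "w = 1"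
    have "y1*x2 = lbar (x1*y2)" using l1 l2 by (simp add: lbar_mult y1_def y2_def mult.commute)
    hence "fls_nth w 0 = fls_nth (x1*y2) 0 + fls_nth (x1*y2) 0"
      using l1 ly by (simp add: w_def nth0_bar)
    also have "\<dots> = 0" by simp
    finally show False using \<open>w = 1\<close> by simp
  qed
  ultimately have "L = 1" using pal_deg(2)[OF pw wnz] pal_deg(2)[OF pL Lnz] by auto
  hence "w = t" using wL by simp
  thus ?thesis using wdef by (simp add: t_def u_def v_def)
qed


theorem mainTheorem4:
  fixes xi :: "lp \<times> lp"
  assumes "laurent_poly (fst xi)" and "laurent_poly (snd xi)"
    and "minimal xi"
  shows "((\<exists>A. CSCA A \<and> mat_vec A xi = (fls_X * fst xi, fls_X * snd xi))
            \<longleftrightarrow> (\<exists>B. CSCA B \<and> mat_vec B xi = (1, fls_X)))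
       \<and> ((\<exists>B. CSCA B \<and> mat_vec B xi = (1, fls_X))
            \<longleftrightarrow> wedge xi (vbar xi) = fls_X_inv + fls_X)"
proof -
  obtain x1 x2 where xi: "xi = (x1, x2)" by (cases xi)
  have l1: "laurent_poly x1" and l2: "laurent_poly x2" and m: "minimal (x1, x2)"
    using assms xi by auto
  note e23 = eq23[OF l1 l2]
  have e12: "(\<exists>A. CSCA A \<and> mat_vec A (x1, x2) = (fls_X * x1, fls_X * x2))
            \<longleftrightarrow> (\<exists>B. CSCA B \<and> mat_vec B (x1, x2) = (1, fls_X))"
    using imp13[OF l1 l2 m] imp21 e23 by blast
  show ?thesis using e12 e23 xi by simp
qed

end
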